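(* Let $G=(V,E)$ be any graph on $n\geq 1$ vertices. Then $F(G)\geq \lfloor (n-1)/2\rfloor$.
   Context: All graphs are finite and simple. Given a graph $G=(V,E)$ and a set $S\subseteq V$ of filled vertices, the color change rule is: if a filled vertex $v$ has exactly one unfilled neighbor $w$, then $w$ becomes filled. The derived set of $S$ is the set of filled vertices obtained after applying the rule until no further application is possible. $S$ is a zero forcing set if its derived set is $V$; otherwise $S$ is a failed zero forcing set. The failed zero forcing number $F(G)$ is the maximum size of a failed zero forcing set of $G$. *)

theory Defs
  imports Main
begin

definition simple_graph :: "'a set \<Rightarrow> ('a \<Rightarrow> 'a \<Rightarrow> bool) \<Rightarrow> bool" where
  "simple_graph V E \<longleftrightarrow> finite V \<and> (\<forall>u v. E u v \<longrightarrow> u \<in> V \<and> v \<in> V) \<and>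
     (\<forall>u v. E u v \<longrightarrow> E v u) \<and> (\<forall>v. \<not> E v v)"

inductive_set derived_set :: "'a set \<Rightarrow> ('a \<Rightarrow> 'a \<Rightarrow> bool) \<Rightarrow> 'a set \<Rightarrow> 'a set"
  for V :: "'a set" and E :: "'a \<Rightarrow> 'a \<Rightarrow> bool" and S :: "'a set" where
  init: "w \<in> S \<Longrightarrow> w \<in> derived_set V E S"
| force: "v \<in> derived_set V E S \<Longrightarrow> E v w \<Longrightarrow>
          (\<forall>u. E v u \<and> u \<noteq> w \<longrightarrow> u \<in> derived_set V E S) \<Longrightarrow> w \<in> derived_set V E S"

definition zero_forcing_set :: "'a set \<Rightarrow> ('a \<Rightarrow> 'a \<Rightarrow> bool) \<Rightarrow> 'a set \<Rightarrow> bool" where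
  "zero_forcing_set V E S \<longleftrightarrow> S \<subseteq> V \<and> derived_set V E S = V"

definition failed_zero_forcing_set :: "'a set \<Rightarrow> ('a \<Rightarrow> 'a \<Rightarrow> bool) \<Rightarrow> 'a set \<Rightarrow> bool" where
  "failed_zero_forcing_set V E S \<longleftrightarrow> S \<subseteq> V \<and> derived_set V E S \<noteq> V"

text \<open>Failed zero forcing number: maximum size of a failed zero forcing set
(for n \<ge> 1 the empty set is failed, so the maximum exists).\<close>
definition failed_zf_number :: "'a set \<Rightarrow> ('a \<Rightarrow> 'a \<Rightarrow> bool) \<Rightarrow> nat" where
  "failed_zf_number V E = Max (card ` {S. failed_zero_forcing_set V E S})"

end

theory Submission
  imports Defs
begin


definition is_fort :: "'a set \<Rightarrow> ('a \<Rightarrow> 'a \<Rightarrow> bool) \<Rightarrow> 'a set \<Rightarrow> bool" where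
  "is_fort V E U \<longleftrightarrow> (\<forall>x\<in>V-U. card {u\<in>U. E x u} \<noteq> 1)"

lemma sum_if_card: "finite S \<Longrightarrow> (\<Sum>a\<in>S. if P a then 1 else 0) = card {a\<in>S. P a}"
  by (simp add: sum.inter_filter[symmetric])

lemma fort_derived:
  assumes sg: "simple_graph V E" and UV: "U \<subseteq> V" and fort: "is_fort V E U"
  shows "derived_set V E (V - U) \<subseteq> V - U"
proof
  fix w assume "w \<in> derived_set V E (V - U)"
  then show "w \<in> V - U"
  proof (induction rule: derived_set.induct)
    case (init w) then show ?case .
  next
    case (force v w)
    have wV: "w \<in> V" using force(2) sg unfolding simple_graph_def by blast
    show ?case
    proof (rule ccontr)
      assume "w \<notin> V - U"
      with wV have wU: "w \<in> U" by blast
      have "{u\<in>U. E v u} = {w}"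
        using force wU by blast
      then have "card {u\<in>U. E v u} = 1" by simp
      with fort force show False unfolding is_fort_def by blast
    qed
  qed
qed

lemma final:
  assumes sg: "simple_graph V E" and n1: "card V \<ge> 1"
    and ex: "\<exists>U. U \<subseteq> V \<and> U \<noteq> {} \<and> is_fort V E U \<and> card U \<le> card V div 2 + 1"
  shows "failed_zf_number V E \<ge> (card V - 1) div 2"
proof -
  obtain U where U: "U \<subseteq> V" "U \<noteq> {}" "is_fort V E U" "card U \<le> card V div 2 + 1"
    using ex by blast
  have finV: "finite V" using sg unfolding simple_graph_def by blast
  have d: "derived_set V E (V - U) \<subseteq> V - U" using fort_derived[OF sg U(1) U(3)] .
  have "derived_set V E (V - U) \<noteq> V" using d U(1,2) by blast
  then have fl: "failed_zero_forcing_set V E (V - U)"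
    unfolding failed_zero_forcing_set_def by blast
  have fin: "finite (card ` {S. failed_zero_forcing_set V E S})"
  proof -
    have "{S. failed_zero_forcing_set V E S} \<subseteq> Pow V"
      unfolding failed_zero_forcing_set_def by blast
    then show ?thesis using finV by (meson finite_Pow_iff finite_imageI finite_subset)
  qed
  have "card (V - U) \<le> failed_zf_number V E"
    unfolding failed_zf_number_def using fin fl by (simp add: Max_ge)
  moreover have "card (V - U) = card V - card U"
    using U(1) finV by (simp add: card_Diff_subset finite_subset)
  moreover have "card V - card U \<ge> (card V - 1) div 2"
    using U(4) n1 by linarith
  ultimately show ?thesis by linarith
qed


lemma maxcut_case:
  assumes sg: "simple_graph V E" and ne: "V \<noteq> {}"
    and deg: "\<forall>x\<in>V. card {u. E x u} \<ge> 3"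
  shows "\<exists>U. U \<subseteq> V \<and> U \<noteq> {} \<and> is_fort V E U \<and> card U \<le> card V div 2 + 1"
proof -
  have finV: "finite V" and inV: "\<And>u v. E u v \<Longrightarrow> u \<in> V \<and> v \<in> V"
    and sym: "\<And>u v. E u v \<Longrightarrow> E v u" and irr: "\<And>v. \<not> E v v"
    using sg unfolding simple_graph_def by blast+
  define cut where "cut A = (\<Sum>a\<in>A. card {b \<in> V - A. E a b})" for A
  have finimg: "finite (cut ` Pow V)" using finV by simp
  define m where "m = Max (cut ` Pow V)"
  have "m \<in> cut ` Pow V" unfolding m_def using finimg by (intro Max_in) auto
  then obtain A where AV: "A \<subseteq> V" and Am: "cut A = m" by blast
  have Amax: "cut B \<le> cut A" if "B \<subseteq> V" for B
    using that finimg Am unfolding m_def by (simp add: Max_ge)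
  have finA: "finite A" using AV finV finite_subset by blast
  \<comment> \<open>local optimality for vertices of A\<close>
  have locA: "card {b\<in>A. E x b} \<le> card {b\<in>V-A. E x b}" if xA: "x \<in> A" for x
  proof -
    have xV: "x \<in> V" using xA AV by blast
    have e1: "cut A = card {b\<in>V-A. E x b} + (\<Sum>a\<in>A-{x}. card {b\<in>V-A. E a b})"
      unfolding cut_def by (rule sum.remove[OF finA xA])
    have e2: "card {b\<in>V-(A-{x}). E a b} = card {b\<in>V-A. E a b} + (if E a x then 1 else 0)"
      if "a \<in> A - {x}" for a
    proof -
      have fin: "finite {b\<in>V-A. E a b}" using finV by simp
      show ?thesis
      proof (cases "E a x")
        case True
        then have "{b\<in>V-(A-{x}). E a b} = insert x {b\<in>V-A. E a b}" using xV xA by blast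
        then show ?thesis using True fin xA by simp
      next
        case False
        then have "{b\<in>V-(A-{x}). E a b} = {b\<in>V-A. E a b}" by blast
        then show ?thesis using False by simp
      qed
    qed
    have "cut (A-{x}) = (\<Sum>a\<in>A-{x}. card {b\<in>V-A. E a b} + (if E a x then 1 else 0))"
      unfolding cut_def using e2 by (intro sum.cong) auto
    also have "\<dots> = (\<Sum>a\<in>A-{x}. card {b\<in>V-A. E a b}) + card {a\<in>A-{x}. E a x}"
      using finA by (simp add: sum.distrib sum_if_card)
    also have "{a\<in>A-{x}. E a x} = {b\<in>A. E x b}" using sym irr by blast
    finally have "cut (A-{x}) = (\<Sum>a\<in>A-{x}. card {b\<in>V-A. E a b}) + card {b\<in>A. E x b}" .
    moreover have "cut (A-{x}) \<le> cut A" using Amax AV by blast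
    ultimately show ?thesis using e1 by linarith
  qed
  have locB: "card {b\<in>V-A. E y b} \<le> card {a\<in>A. E y a}" if yB: "y \<in> V - A" for y
  proof -
    have e1: "cut (insert y A) = card {b\<in>V-insert y A. E y b} + (\<Sum>a\<in>A. card {b\<in>V-insert y A. E a b})"
      unfolding cut_def using finA yB by simp
    have e0: "{b\<in>V-insert y A. E y b} = {b\<in>V-A. E y b}" using irr by blast
    have e2: "card {b\<in>V-A. E a b} = card {b\<in>V-insert y A. E a b} + (if E a y then 1 else 0)"
      if "a \<in> A" for a
    proof -
      have fin: "finite {b\<in>V-insert y A. E a b}" using finV by simp
      show ?thesis
      proof (cases "E a y")
        case True
        then have "{b\<in>V-A. E a b} = insert y {b\<in>V-insert y A. E a b}" using yB by blast
        then show ?thesis using True fin by simp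
      next
        case False
        then have "{b\<in>V-A. E a b} = {b\<in>V-insert y A. E a b}" by blast
        then show ?thesis using False by simp
      qed
    qed
    have "cut A = (\<Sum>a\<in>A. card {b\<in>V-insert y A. E a b} + (if E a y then 1 else 0))"
      unfolding cut_def using e2 by (intro sum.cong) auto
    also have "\<dots> = (\<Sum>a\<in>A. card {b\<in>V-insert y A. E a b}) + card {a\<in>A. E a y}"
      using finA by (simp add: sum.distrib sum_if_card)
    also have "{a\<in>A. E a y} = {a\<in>A. E y a}" using sym by blast
    finally have "cut A = (\<Sum>a\<in>A. card {b\<in>V-insert y A. E a b}) + card {a\<in>A. E y a}" .
    moreover have "cut (insert y A) \<le> cut A" using Amax AV yB by blast
    ultimately show ?thesis using e1[unfolded e0] by linarith
  qed
  have degsplit: "card {u. E x u} = card {b\<in>A. E x b} + card {b\<in>V-A. E x b}" if "x \<in> V" for x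
  proof -
    have eq: "{u. E x u} = {b\<in>A. E x b} \<union> {b\<in>V-A. E x b}"
    proof (rule set_eqI)
      fix u show "u \<in> {u. E x u} \<longleftrightarrow> u \<in> {b\<in>A. E x b} \<union> {b\<in>V-A. E x b}"
        using inV[of x u] by auto
    qed
    have "card ({b\<in>A. E x b} \<union> {b\<in>V-A. E x b}) = card {b\<in>A. E x b} + card {b\<in>V-A. E x b}"
      by (rule card_Un_disjoint) (use finA finV in auto)
    then show ?thesis unfolding eq .
  qed
  have goodA: "card {b\<in>V-A. E x b} \<ge> 2" if "x \<in> A" for x
  proof -
    have xV: "x \<in> V" using that AV by blast
    have "card {u. E x u} \<ge> 3" using deg xV by blast
    then show ?thesis using locA[OF that] degsplit[OF xV] by linarith
  qed
  have goodB: "card {a\<in>A. E y a} \<ge> 2" if "y \<in> V - A" for y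
  proof -
    have xV: "y \<in> V" using that by blast
    have "card {u. E y u} \<ge> 3" using deg xV by blast
    then show ?thesis using locB[OF that] degsplit[OF xV] by linarith
  qed
  obtain x0 where x0: "x0 \<in> V" using ne by blast
  have "cut {x0} = card {b\<in>V-{x0}. E x0 b}" unfolding cut_def by simp
  also have "{b\<in>V-{x0}. E x0 b} = {u. E x0 u}" using inV irr by blast
  finally have "cut {x0} \<ge> 3" using deg x0 by simp
  moreover have "cut {x0} \<le> cut A" using Amax x0 by simp
  ultimately have cA: "cut A \<ge> 3" by linarith
  have c0: "cut {} = 0" by (simp add: cut_def)
  have cV: "cut V = 0" by (simp add: cut_def)
  have Ane: "A \<noteq> {}" using cA c0 by auto
  have AnV: "A \<noteq> V" using cA cV by auto
  have cards: "card A + card (V - A) = card V"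
    proof -
    have "card A \<le> card V" using card_mono[OF finV AV] .
    then show ?thesis using AV finA by (simp add: card_Diff_subset)
  qed
  show ?thesis
  proof (cases "card A \<le> card (V - A)")
    case True
    have "is_fort V E A" unfolding is_fort_def
    proof
      fix x assume "x \<in> V - A"
      then have "card {a\<in>A. E x a} \<ge> 2" by (rule goodB)
      then show "card {u\<in>A. E x u} \<noteq> 1" by simp
    qed
    then show ?thesis using AV Ane True cards by (intro exI[of _ A]) auto
  next
    case False
    have "is_fort V E (V - A)" unfolding is_fort_def
    proof
      fix x assume "x \<in> V - (V - A)"
      then have "x \<in> A" by blast
      then have "card {b\<in>V-A. E x b} \<ge> 2" by (rule goodA)
      then show "card {u\<in>V-A. E x u} \<noteq> 1" by simp
    qed
    moreover have "V - A \<noteq> {}" using AV AnV by blast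
    ultimately show ?thesis using False cards by (intro exI[of _ "V - A"]) auto
  qed
qed


lemma deg0_case:
  assumes sg: "simple_graph V E" and vV: "v \<in> V" and iso: "\<forall>u. \<not> E v u"
  shows "\<exists>U. U \<subseteq> V \<and> U \<noteq> {} \<and> is_fort V E U \<and> card U \<le> card V div 2 + 1"
proof -
  have sym: "\<And>u v. E u v \<Longrightarrow> E v u" using sg unfolding simple_graph_def by blast
  have "is_fort V E {v}" unfolding is_fort_def
  proof
    fix x assume "x \<in> V - {v}"
    have "{u\<in>{v}. E x u} = {}" using iso sym by blast
    then show "card {u\<in>{v}. E x u} \<noteq> 1" by (metis card.empty zero_neq_one)
  qed
  then show ?thesis using vV by (intro exI[of _ "{v}"]) auto
qed

lemma deg1_case:
  fixes V :: "'a set"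
  assumes sg: "simple_graph V E" and vV: "v \<in> V" and Evy: "E v y"
    and only: "\<forall>u. E v u \<longrightarrow> u = y"
    and IH: "\<And>(V'::'a set) E'. card V' < card V \<Longrightarrow> simple_graph V' E' \<Longrightarrow> V' \<noteq> {} \<Longrightarrow>
      \<exists>U. U \<subseteq> V' \<and> U \<noteq> {} \<and> is_fort V' E' U \<and> card U \<le> card V' div 2 + 1"
  shows "\<exists>U. U \<subseteq> V \<and> U \<noteq> {} \<and> is_fort V E U \<and> card U \<le> card V div 2 + 1"
proof -
  have finV: "finite V" and inV: "\<And>u v. E u v \<Longrightarrow> u \<in> V \<and> v \<in> V"
    and sym: "\<And>u v. E u v \<Longrightarrow> E v u" and irr: "\<And>v. \<not> E v v"
    using sg unfolding simple_graph_def by blast+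
  have yV: "y \<in> V" using inV[OF Evy] by blast
  have vy: "v \<noteq> y" using Evy irr by blast
  show ?thesis
  proof (cases "V = {v, y}")
    case True
    have "is_fort V E V" unfolding is_fort_def by simp
    moreover have "card V = 2" using True vy by simp
    ultimately show ?thesis using vV by (intro exI[of _ V]) auto
  next
    case False
    define V' where "V' = V - {v, y}"
    define E' where "E' = (\<lambda>a b. E a b \<and> a \<in> V' \<and> b \<in> V')"
    have V'ne: "V' \<noteq> {}" using False vV yV unfolding V'_def by blast
    have cV': "card V' = card V - 2"
      unfolding V'_def using vV yV vy finV by (simp add: card_Diff_subset)
    have finV': "finite V'" unfolding V'_def using finV by simp
    then have "card V' > 0" using V'ne by auto
    then have cV: "card V = card V' + 2" using cV' by linarith
    have sg': "simple_graph V' E'"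
      unfolding simple_graph_def E'_def using finV' sym irr by blast
    have lt: "card V' < card V" using cV by simp
    obtain U' where U': "U' \<subseteq> V'" "U' \<noteq> {}" "is_fort V' E' U'" "card U' \<le> card V' div 2 + 1"
      using IH[OF lt sg' V'ne] by auto
    have vU: "v \<notin> U'" and yU: "y \<notin> U'" using U'(1) unfolding V'_def by auto
    have U'V: "U' \<subseteq> V" using U'(1) unfolding V'_def by auto
    have finU': "finite U'" using U'(1) finV' finite_subset by blast
    have other: "card {u\<in>U'. E x u} \<noteq> 1" if "x \<in> V' - U'" for x
    proof -
      have "{u\<in>U'. E x u} = {u\<in>U'. E' x u}" using that U'(1) unfolding E'_def by auto
      then show ?thesis using U'(3) that unfolding is_fort_def by auto
    qed
    show ?thesis
    proof (cases "card {u\<in>U'. E y u} = 1")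
      case False
      have "is_fort V E U'" unfolding is_fort_def
      proof
        fix x assume x: "x \<in> V - U'"
        show "card {u\<in>U'. E x u} \<noteq> 1"
        proof (cases "x = v")
          case True
          have "{u\<in>U'. E x u} = {}" using True only yU by blast
          then show ?thesis by (metis card.empty zero_neq_one)
        next
          case xv: False
          show ?thesis
          proof (cases "x = y")
            case True then show ?thesis using False by simp
          next
            case False
            then have "x \<in> V' - U'" using x xv unfolding V'_def by blast
            then show ?thesis by (rule other)
          qed
        qed
      qed
      then show ?thesis using U' U'V cV by (intro exI[of _ U']) auto
    next
      case True
      have "is_fort V E (insert v U')" unfolding is_fort_def
      proof
        fix x assume x: "x \<in> V - insert v U'"
        show "card {u\<in>insert v U'. E x u} \<noteq> 1"
        proof (cases "x = y")
          case True
          have "{u\<in>insert v U'. E x u} = insert v {u\<in>U'. E y u}" using True Evy sym by blast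
          then have "card {u\<in>insert v U'. E x u} = card {u\<in>U'. E y u} + 1"
            using vU finU' by simp
          then show ?thesis using \<open>card {u\<in>U'. E y u} = 1\<close> by simp
        next
          case False
          have nxv: "\<not> E x v" using False only sym by blast
          have "{u\<in>insert v U'. E x u} = {u\<in>U'. E x u}" using nxv by blast
          moreover have "x \<in> V' - U'" using x False unfolding V'_def by blast
          ultimately show ?thesis using other by simp
        qed
      qed
      moreover have "card (insert v U') \<le> card V div 2 + 1"
        using U'(4) cV finU' vU by simp
      ultimately show ?thesis using U'V vV by (intro exI[of _ "insert v U'"]) auto
    qed
  qed
qed



lemma deg2_case:
  fixes V :: "'a set"
  assumes sg: "simple_graph V E" and vV: "v \<in> V" and Evy: "E v y" and Evz: "E v z"
    and yz: "y \<noteq> z"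
    and only: "\<forall>u. E v u \<longrightarrow> u = y \<or> u = z"
    and IH: "\<And>(V'::'a set) E'. card V' < card V \<Longrightarrow> simple_graph V' E' \<Longrightarrow> V' \<noteq> {} \<Longrightarrow>
      \<exists>U. U \<subseteq> V' \<and> U \<noteq> {} \<and> is_fort V' E' U \<and> card U \<le> card V' div 2 + 1"
  shows "\<exists>U. U \<subseteq> V \<and> U \<noteq> {} \<and> is_fort V E U \<and> card U \<le> card V div 2 + 1"
proof -
  have finV: "finite V" and inV: "\<And>u v. E u v \<Longrightarrow> u \<in> V \<and> v \<in> V"
    and sym: "\<And>u v. E u v \<Longrightarrow> E v u" and irr: "\<And>v. \<not> E v v"
    using sg unfolding simple_graph_def by blast+
  have yV: "y \<in> V" using inV[OF Evy] by blast
  have zV: "z \<in> V" using inV[OF Evz] by blast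
  have vy: "v \<noteq> y" using Evy irr by blast
  have vz: "v \<noteq> z" using Evz irr by blast
  define V' where "V' = V - {v, y}"
  define E' where "E' = (\<lambda>a b. a \<in> V' \<and> b \<in> V' \<and> a \<noteq> b \<and>
     (E a b \<or> (a = z \<and> E y b) \<or> (b = z \<and> E y a)))"
  have zV': "z \<in> V'" unfolding V'_def using zV vz yz by blast
  then have V'ne: "V' \<noteq> {}" by blast
  have cV': "card V' = card V - 2"
    unfolding V'_def using vV yV vy finV by (simp add: card_Diff_subset)
  have finV': "finite V'" unfolding V'_def using finV by simp
  then have "card V' > 0" using V'ne by auto
  then have cV: "card V = card V' + 2" using cV' by linarith
  have sg': "simple_graph V' E'"
    unfolding simple_graph_def E'_def using finV' sym by blast
  have lt: "card V' < card V" using cV by simp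
  obtain U' where U': "U' \<subseteq> V'" "U' \<noteq> {}" "is_fort V' E' U'" "card U' \<le> card V' div 2 + 1"
    using IH[OF lt sg' V'ne] by auto
  have vU: "v \<notin> U'" and yU: "y \<notin> U'" using U'(1) unfolding V'_def by auto
  have U'V: "U' \<subseteq> V" using U'(1) unfolding V'_def by auto
  have finU': "finite U'" using U'(1) finV' finite_subset by blast
  have fortU': "card {u\<in>U'. E' x u} \<noteq> 1" if "x \<in> V' - U'" for x
    using U'(3) that unfolding is_fort_def by auto
  have card0: "card S \<noteq> 1" if "S = {}" for S :: "'a set" using that by simp
  show ?thesis
  proof (cases "z \<in> U'")
    case zU: True
    have "is_fort V E (insert y U')" unfolding is_fort_def
    proof
      fix x assume x: "x \<in> V - insert y U'"
      show "card {u\<in>insert y U'. E x u} \<noteq> 1"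
      proof (cases "x = v")
        case True
        have "{u\<in>insert y U'. E x u} = {y, z}"
        proof (rule set_eqI)
          fix u show "u \<in> {u\<in>insert y U'. E x u} \<longleftrightarrow> u \<in> {y, z}"
            using True only Evy Evz zU by auto
        qed
        then show ?thesis using yz by simp
      next
        case False
        then have x': "x \<in> V' - U'" using x unfolding V'_def by blast
        have xz: "x \<noteq> z" using x' zU by blast
        have xV': "x \<in> V'" using x' by blast
        show ?thesis
        proof (cases "E x y")
          case True
          have e1: "{u\<in>insert y U'. E x u} = insert y {u\<in>U'. E x u}" using True by auto
          have Eyx: "E y x" using True sym by blast
          have e2: "{u\<in>U'. E' x u} = insert z {u\<in>U'. E x u}"
          proof (rule set_eqI)
            fix u show "u \<in> {u\<in>U'. E' x u} \<longleftrightarrow> u \<in> insert z {u\<in>U'. E x u}"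
              using Eyx xz zU U'(1) xV' x' unfolding E'_def by auto
          qed
          have "{u\<in>U'. E x u} \<noteq> {}"
          proof
            assume h: "{u\<in>U'. E x u} = {}"
            have "{u\<in>U'. E' x u} = {z}" using e2 unfolding h by simp
            then show False using fortU'[OF x'] by simp
          qed
          then have "card {u\<in>U'. E x u} \<ge> 1" using finU' by (simp add: Suc_leI card_gt_0_iff)
          moreover have "card {u\<in>insert y U'. E x u} = card {u\<in>U'. E x u} + 1"
            using e1 yU finU' by simp
          ultimately show ?thesis by simp
        next
          case False
          have e1: "{u\<in>insert y U'. E x u} = {u\<in>U'. E x u}" using False by auto
          have Eyx: "\<not> E y x" using False sym by blast
          have e2: "{u\<in>U'. E' x u} = {u\<in>U'. E x u}"
          proof (rule set_eqI)
            fix u show "u \<in> {u\<in>U'. E' x u} \<longleftrightarrow> u \<in> {u\<in>U'. E x u}"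
              using Eyx xz U'(1) xV' x' unfolding E'_def by auto
          qed
          show ?thesis using e1 e2 fortU'[OF x'] by simp
        qed
      qed
    qed
    moreover have "card (insert y U') \<le> card V div 2 + 1"
      using U'(4) cV finU' yU by simp
    ultimately show ?thesis using U'V yV by (intro exI[of _ "insert y U'"]) auto
  next
    case zU: False
    have other: "card {u\<in>U'. E x u} \<noteq> 1" if "x \<in> V' - U'" "x \<noteq> z" for x
    proof -
      have "{u\<in>U'. E' x u} = {u\<in>U'. E x u}"
      proof (rule set_eqI)
        fix u show "u \<in> {u\<in>U'. E' x u} \<longleftrightarrow> u \<in> {u\<in>U'. E x u}"
          using that zU U'(1) unfolding E'_def by auto
      qed
      then show ?thesis using fortU'[OF that(1)] by simp
    qed
    have Fz: "{u\<in>U'. E' z u} = {u\<in>U'. E z u} \<union> {u\<in>U'. E y u}"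
    proof (rule set_eqI)
      fix u show "u \<in> {u\<in>U'. E' z u} \<longleftrightarrow> u \<in> {u\<in>U'. E z u} \<union> {u\<in>U'. E y u}"
        using zU U'(1) zV' unfolding E'_def by auto
    qed
    have cz: "card ({u\<in>U'. E z u} \<union> {u\<in>U'. E y u}) \<noteq> 1"
      using fortU'[of z] zV' zU Fz by simp
    show ?thesis
    proof (cases "card {u\<in>U'. E z u} \<noteq> 1 \<and> card {u\<in>U'. E y u} \<noteq> 1")
      case True
      have "is_fort V E U'" unfolding is_fort_def
      proof
        fix x assume x: "x \<in> V - U'"
        show "card {u\<in>U'. E x u} \<noteq> 1"
        proof (cases "x = v \<or> x = y \<or> x = z")
          case True
          moreover have "card {u\<in>U'. E v u} \<noteq> 1"
          proof -
            have "{u\<in>U'. E v u} = {}" using only yU zU by blast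
            then show ?thesis by (rule card0)
          qed
          ultimately show ?thesis using \<open>card {u\<in>U'. E z u} \<noteq> 1 \<and> card {u\<in>U'. E y u} \<noteq> 1\<close>
            by blast
        next
          case False
          then have "x \<in> V' - U'" using x unfolding V'_def by blast
          then show ?thesis using other False by blast
        qed
      qed
      then show ?thesis using U' U'V cV by (intro exI[of _ U']) auto
    next
      case False
      have az: "{u\<in>U'. E z u} \<noteq> {}"
      proof
        assume a0: "{u\<in>U'. E z u} = {}"
        then have "card {u\<in>U'. E y u} = 1" using False by (metis card.empty zero_neq_one)
        then show False using cz unfolding a0 by simp
      qed
      have ay: "{u\<in>U'. E y u} \<noteq> {}"
      proof
        assume a0: "{u\<in>U'. E y u} = {}"
        then have "card {u\<in>U'. E z u} = 1" using False by (metis card.empty zero_neq_one)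
        then show False using cz unfolding a0 by simp
      qed
      have "is_fort V E (insert v U')" unfolding is_fort_def
      proof
        fix x assume x: "x \<in> V - insert v U'"
        show "card {u\<in>insert v U'. E x u} \<noteq> 1"
        proof (cases "x = y \<or> x = z")
          case True
          then have e: "{u\<in>insert v U'. E x u} = insert v {u\<in>U'. E x u}"
            using Evy Evz sym by blast
          have ne: "{u\<in>U'. E x u} \<noteq> {}" using True az ay by blast
          then have "card {u\<in>U'. E x u} \<ge> 1" using finU' by (simp add: Suc_leI card_gt_0_iff)
          moreover have "card {u\<in>insert v U'. E x u} = card {u\<in>U'. E x u} + 1"
            using e vU finU' by simp
          ultimately show ?thesis by simp
        next
          case False
          have nxv: "\<not> E x v" using False only sym by blast
          have "{u\<in>insert v U'. E x u} = {u\<in>U'. E x u}" using nxv by blast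
          moreover have "x \<in> V' - U'" using x False unfolding V'_def by blast
          ultimately show ?thesis using other False by simp
        qed
      qed
      moreover have "card (insert v U') \<le> card V div 2 + 1"
        using U'(4) cV finU' vU by simp
      ultimately show ?thesis using U'V vV by (intro exI[of _ "insert v U'"]) auto
    qed
  qed
qed



lemma main_fort:
  fixes V :: "'a set"
  shows "simple_graph V E \<Longrightarrow> V \<noteq> {} \<Longrightarrow>
    \<exists>U. U \<subseteq> V \<and> U \<noteq> {} \<and> is_fort V E U \<and> card U \<le> card V div 2 + 1"
proof (induction "card V" arbitrary: V E rule: less_induct)
  case less
  have IH: "\<And>(V'::'a set) E'. card V' < card V \<Longrightarrow> simple_graph V' E' \<Longrightarrow> V' \<noteq> {} \<Longrightarrow>
      \<exists>U. U \<subseteq> V' \<and> U \<noteq> {} \<and> is_fort V' E' U \<and> card U \<le> card V' div 2 + 1"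
    using less.hyps by blast
  have sg: "simple_graph V E" by fact
  have finV: "finite V" and inV: "\<And>u v. E u v \<Longrightarrow> u \<in> V \<and> v \<in> V"
    using sg unfolding simple_graph_def by blast+
  show ?case
  proof (cases "\<exists>v\<in>V. card {u. E v u} \<le> 2")
    case False
    then have "\<forall>x\<in>V. card {u. E x u} \<ge> 3" by auto
    then show ?thesis using maxcut_case[OF sg less.prems(2)] by blast
  next
    case True
    then obtain v where vV: "v \<in> V" and c: "card {u. E v u} \<le> 2" by blast
    have fin: "finite {u. E v u}" using finV inV by (metis mem_Collect_eq rev_finite_subset subsetI)
    consider "card {u. E v u} = 0" | "card {u. E v u} = 1" | "card {u. E v u} = 2"
      using c by linarith
    then show ?thesis
    proof cases
      case 1
      then have "{u. E v u} = {}" using fin by simp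
      then have "\<forall>u. \<not> E v u" by blast
      then show ?thesis using deg0_case[OF sg vV] by blast
    next
      case 2
      then obtain y where "{u. E v u} = {y}" using card_1_singleton_iff by (metis One_nat_def)
      then have "E v y" "\<forall>u. E v u \<longrightarrow> u = y" by blast+
      then show ?thesis using deg1_case[OF sg vV _ _ IH] by blast
    next
      case 3
      then obtain y z where yz: "{u. E v u} = {y, z}" "y \<noteq> z" using card_2_iff by metis
      then have "E v y" "E v z" "\<forall>u. E v u \<longrightarrow> u = y \<or> u = z" by blast+
      then show ?thesis using deg2_case[OF sg vV _ _ yz(2) _ IH] by blast
    qed
  qed
qed

theorem theorem5:
  fixes V :: "'a set" and E :: "'a \<Rightarrow> 'a \<Rightarrow> bool"
  assumes "simple_graph V E" and "card V \<ge> 1"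
  shows "failed_zf_number V E \<ge> (card V - 1) div 2"
proof -
  have "V \<noteq> {}" using assms(2) by auto
  then show ?thesis using final[OF assms] main_fort[OF assms(1)] by blast
qed

end
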